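(* Let $n$ items have positive integer sizes $w_1\le w_2\le\dots\le w_n$, with total size $W=\sum_{i=1}^n w_i$, and let there be $m$ bins, bin $j$ having positive integer capacity $C_j$, fixed cost $f_j\ge 0$ and unit cost $c_j\ge 0$, where $\sum_{j=1}^m C_j\ge W$. For each bin set $r_j=f_j/C_j+c_j$, let $a_1,\dots,a_m$ be a permutation of $\{1,\dots,m\}$ with $r_{a_1}\le r_{a_2}\le\dots\le r_{a_m}$, and let $k$ be the minimum integer such that $\sum_{j=1}^{k}C_{a_j}\ge W$. Define $$Lb_1=\sum_{j=1}^{k-1}C_{a_j}r_{a_j}+\Big(W-\sum_{j=1}^{k-1}C_{a_j}\Big)r_{a_k}.$$ Then $Lb_1$ equals the optimal value of the linear program $$\min \sum_{j=1}^m (f_jy_j+c_jl_j)$$ subject to $\sum_{j=1}^m x_{ij}=1$ for all $i\in\{1,\dots,n\}$; $\sum_{i=1}^n w_ix_{ij}=l_j$ for all $j\in\{1,\dots,m\}$; $l_j\le C_jy_j$ for all $j$; $0\le x_{ij}\le 1$, $0\le y_j\le 1$, $l_j\ge 0$ for all $i,j$.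
   Context: This linear program is the linear relaxation of an integer program for the Bin Packing with Usage Cost problem, in which each item is assigned to exactly one bin, the load $l_j$ of bin $j$ (total size of its items) may not exceed $C_j$, and a used bin $j$ costs $f_j+c_jl_j$; $y_j$ indicates whether bin $j$ is used and $x_{ij}$ whether item $i$ is in bin $j$. *)

theory Defs
  imports "HOL-Analysis.Analysis"
begin

definition ratio :: "(nat \<Rightarrow> nat) \<Rightarrow> (nat \<Rightarrow> real) \<Rightarrow> (nat \<Rightarrow> real) \<Rightarrow> nat \<Rightarrow> real" where
  "ratio C f c j = f j / real (C j) + c j"

definition total_size :: "nat \<Rightarrow> (nat \<Rightarrow> nat) \<Rightarrow> nat" where
  "total_size n w = (\<Sum>i=1..n. w i)"

definition kmin :: "nat \<Rightarrow> (nat \<Rightarrow> nat) \<Rightarrow> (nat \<Rightarrow> nat) \<Rightarrow> nat" where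
  "kmin W C a = (LEAST k. (\<Sum>j=1..k. C (a j)) \<ge> W)"

definition Lb1 :: "nat \<Rightarrow> (nat \<Rightarrow> nat) \<Rightarrow> (nat \<Rightarrow> nat) \<Rightarrow> (nat \<Rightarrow> real) \<Rightarrow> (nat \<Rightarrow> real)
                   \<Rightarrow> (nat \<Rightarrow> nat) \<Rightarrow> real" where
  "Lb1 n w C f c a =
     (let W = total_size n w; k = kmin W C a; r = ratio C f c in
        (\<Sum>j=1..k-1. real (C (a j)) * r (a j))
        + (real W - (\<Sum>j=1..k-1. real (C (a j)))) * r (a k))"

definition lp_feasible :: "nat \<Rightarrow> nat \<Rightarrow> (nat \<Rightarrow> nat) \<Rightarrow> (nat \<Rightarrow> nat)
     \<Rightarrow> (nat \<Rightarrow> nat \<Rightarrow> real) \<Rightarrow> (nat \<Rightarrow> real) \<Rightarrow> (nat \<Rightarrow> real) \<Rightarrow> bool" where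
  "lp_feasible n m w C x y l \<longleftrightarrow>
     (\<forall>i\<in>{1..n}. (\<Sum>j=1..m. x i j) = 1) \<and>
     (\<forall>j\<in>{1..m}. (\<Sum>i=1..n. real (w i) * x i j) = l j) \<and>
     (\<forall>j\<in>{1..m}. l j \<le> real (C j) * y j) \<and>
     (\<forall>i\<in>{1..n}. \<forall>j\<in>{1..m}. 0 \<le> x i j \<and> x i j \<le> 1) \<and>
     (\<forall>j\<in>{1..m}. 0 \<le> y j \<and> y j \<le> 1 \<and> 0 \<le> l j)"

definition lp_objective :: "nat \<Rightarrow> (nat \<Rightarrow> real) \<Rightarrow> (nat \<Rightarrow> real)
     \<Rightarrow> (nat \<Rightarrow> real) \<Rightarrow> (nat \<Rightarrow> real) \<Rightarrow> real" where
  "lp_objective m f c y l = (\<Sum>j=1..m. f j * y j + c j * l j)"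

definition lp_optimal_value :: "nat \<Rightarrow> nat \<Rightarrow> (nat \<Rightarrow> nat) \<Rightarrow> (nat \<Rightarrow> nat)
     \<Rightarrow> (nat \<Rightarrow> real) \<Rightarrow> (nat \<Rightarrow> real) \<Rightarrow> real \<Rightarrow> bool" where
  "lp_optimal_value n m w C f c v \<longleftrightarrow>
     (\<exists>x y l. lp_feasible n m w C x y l \<and> lp_objective m f c y l = v) \<and>
     (\<forall>x y l. lp_feasible n m w C x y l \<longrightarrow> v \<le> lp_objective m f c y l)"

end

theory Submission
  imports Defs
begin

lemma greedy_lb:
  fixes m k :: nat and r Cr l :: "nat \<Rightarrow> real" and a :: "nat \<Rightarrow> nat" and W :: real
  assumes k: "1 \<le> k" "k \<le> m"
    and sorted: "\<forall>j\<in>{1..m}. \<forall>j'\<in>{1..m}. j \<le> j' \<longrightarrow> r (a j) \<le> r (a j')"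
    and lb: "\<forall>t\<in>{1..m}. 0 \<le> l (a t) \<and> l (a t) \<le> Cr (a t)"
    and W: "(\<Sum>t=1..m. l (a t)) = W"
  shows "(\<Sum>j=1..k-1. Cr (a j) * r (a j)) + (W - (\<Sum>j=1..k-1. Cr (a j))) * r (a k)
         \<le> (\<Sum>t=1..m. r (a t) * l (a t))"
proof -
  define R where "R = r (a k)"
  define g where "g t = (r (a t) - R) * l (a t) - (if t < k then (r (a t) - R) * Cr (a t) else 0)" for t
  have g0: "g t \<ge> 0" if t: "t \<in> {1..m}" for t
  proof (cases "t < k")
    case True
    have "r (a t) \<le> R" unfolding R_def using sorted t k True by auto
    moreover have "l (a t) \<le> Cr (a t)" using lb t by auto
    ultimately have "(r (a t) - R) * (l (a t) - Cr (a t)) \<ge> 0"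
      by (intro mult_nonpos_nonpos) auto
    then show ?thesis unfolding g_def using True by (simp add: algebra_simps)
  next
    case False
    have "r (a t) \<ge> R" unfolding R_def using sorted t k False by auto
    moreover have "l (a t) \<ge> 0" using lb t by auto
    ultimately show ?thesis unfolding g_def using False by simp
  qed
  have split: "(\<Sum>t=1..m. (if t < k then h t else 0)) = (\<Sum>t=1..k-1. h t)" for h :: "nat \<Rightarrow> real"
  proof -
    have "(\<Sum>t=1..m. (if t < k then h t else 0)) = (\<Sum>t\<in>{1..m} \<inter> {t. t < k}. h t)"
      by (simp add: sum.inter_restrict)
    also have "{1..m} \<inter> {t. t < k} = {1..k-1}" using k by auto
    finally show ?thesis .
  qed
  have "0 \<le> (\<Sum>t=1..m. g t)" using g0 by (intro sum_nonneg) auto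
  also have "(\<Sum>t=1..m. g t) = (\<Sum>t=1..m. r (a t) * l (a t)) - R * W
        - (\<Sum>t=1..k-1. (r (a t) - R) * Cr (a t))"
    unfolding g_def sum_subtractf split using W[symmetric]
    by (simp add: algebra_simps sum_distrib_left sum_subtractf)
  finally show ?thesis unfolding R_def[symmetric]
    by (simp add: algebra_simps sum_subtractf sum_distrib_left)
qed


lemma sum_if_less:
  assumes "k \<le> Suc m"
  shows "(\<Sum>t=1..m. (if t < k then h t else 0)) = (\<Sum>t=1..k-1. (h t::real))"
proof -
  have "(\<Sum>t=1..m. (if t < k then h t else 0)) = (\<Sum>t\<in>{1..m} \<inter> {t. t < k}. h t)"
    by (simp add: sum.inter_restrict)
  also have "{1..m} \<inter> {t. t < k} = {1..k-1}" using assms by auto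
  finally show ?thesis .
qed

theorem proposition2:
  fixes n m :: nat
    and w C :: "nat \<Rightarrow> nat"
    and f c :: "nat \<Rightarrow> real"
    and a :: "nat \<Rightarrow> nat"
  assumes w_pos: "\<forall>i\<in>{1..n}. 0 < w i"
    and w_sorted: "\<forall>i\<in>{1..n}. \<forall>i'\<in>{1..n}. i \<le> i' \<longrightarrow> w i \<le> w i'"
    and C_pos: "\<forall>j\<in>{1..m}. 0 < C j"
    and f_nonneg: "\<forall>j\<in>{1..m}. 0 \<le> f j"
    and c_nonneg: "\<forall>j\<in>{1..m}. 0 \<le> c j"
    and cap: "(\<Sum>j=1..m. C j) \<ge> total_size n w"
    and a_perm: "bij_betw a {1..m} {1..m}"
    and a_sorted: "\<forall>j\<in>{1..m}. \<forall>j'\<in>{1..m}. j \<le> j' \<longrightarrow> ratio C f c (a j) \<le> ratio C f c (a j')"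
  shows "lp_optimal_value n m w C f c (Lb1 n w C f c a)"
proof -
  define W where "W = total_size n w"
  define r where "r = ratio C f c"
  define k where "k = kmin W C a"
  define S where "S = (\<Sum>j=1..k-1. real (C (a j)))"
  have reidx: "(\<Sum>t=1..m. g (a t)) = (\<Sum>j=1..m. g j)" for g :: "nat \<Rightarrow> real"
    using sum.reindex_bij_betw[OF a_perm] by blast
  have reidxn: "(\<Sum>t=1..m. C (a t)) = (\<Sum>j=1..m. C j)"
    using sum.reindex_bij_betw[OF a_perm] by blast
  have Lb: "Lb1 n w C f c a = (\<Sum>j=1..k-1. real (C (a j)) * r (a j)) + (real W - S) * r (a k)"
    unfolding Lb1_def Let_def W_def[symmetric] k_def[symmetric] r_def[symmetric] S_def ..
  have r_nonneg: "r j \<ge> 0" if "j \<in> {1..m}" for j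
    using that f_nonneg c_nonneg unfolding r_def ratio_def by auto
  have Wsum: "real W = (\<Sum>i=1..n. real (w i))" unfolding W_def total_size_def by simp
  have amem: "a t \<in> {1..m}" if "t \<in> {1..m}" for t
    using a_perm that by (auto simp: bij_betw_def)
  have lower: "Lb1 n w C f c a \<le> lp_objective m f c y l" if feas: "lp_feasible n m w C x y l" for x y l
  proof -
    have sumL: "(\<Sum>j=1..m. l j) = real W"
    proof -
      have "(\<Sum>j=1..m. l j) = (\<Sum>j=1..m. \<Sum>i=1..n. real (w i) * x i j)"
        using feas unfolding lp_feasible_def by (intro sum.cong) auto
      also have "\<dots> = (\<Sum>i=1..n. \<Sum>j=1..m. real (w i) * x i j)" by (rule sum.swap)
      also have "\<dots> = (\<Sum>i=1..n. real (w i) * (\<Sum>j=1..m. x i j))" by (simp add: sum_distrib_left)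
      also have "\<dots> = (\<Sum>i=1..n. real (w i))"
        using feas unfolding lp_feasible_def by (intro sum.cong) auto
      finally show ?thesis using Wsum by simp
    qed
    have lC: "0 \<le> l j \<and> l j \<le> real (C j)" if j: "j \<in> {1..m}" for j
    proof -
      have "l j \<le> real (C j) * y j" "y j \<le> 1" "0 \<le> l j"
        using feas j unfolding lp_feasible_def by auto
      moreover have "real (C j) * y j \<le> real (C j)" using \<open>y j \<le> 1\<close>
        by (simp add: mult_left_le)
      ultimately show ?thesis by linarith
    qed
    have objge: "r j * l j \<le> f j * y j + c j * l j" if j: "j \<in> {1..m}" for j
    proof -
      have Cp: "real (C j) > 0" using C_pos j by auto
      have "l j \<le> real (C j) * y j" using feas j unfolding lp_feasible_def by auto
      hence "f j / real (C j) * l j \<le> f j / real (C j) * (real (C j) * y j)"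
        using f_nonneg j Cp by (intro mult_left_mono) auto
      also have "\<dots> = f j * y j" using Cp by simp
      finally show ?thesis unfolding r_def ratio_def by (simp add: algebra_simps)
    qed
    have obj: "(\<Sum>j=1..m. r j * l j) \<le> lp_objective m f c y l"
      unfolding lp_objective_def using objge by (intro sum_mono) auto
    show ?thesis
    proof (cases "W = 0")
      case True
      have "k = 0" unfolding k_def kmin_def True by simp
      hence "Lb1 n w C f c a = 0" using Lb True S_def by simp
      moreover have "0 \<le> (\<Sum>j=1..m. r j * l j)"
        using r_nonneg lC by (intro sum_nonneg mult_nonneg_nonneg) auto
      ultimately show ?thesis using obj by linarith
    next
      case False
      have Pm: "W \<le> (\<Sum>j=1..m. C (a j))" using cap reidxn W_def by simp
      have km: "k \<le> m" unfolding k_def kmin_def by (rule Least_le) (rule Pm)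
      have k1: "1 \<le> k"
      proof (rule ccontr)
        assume "\<not> 1 \<le> k"
        hence "k = 0" by simp
        moreover have "W \<le> (\<Sum>j=1..k. C (a j))" unfolding k_def kmin_def by (rule LeastI) (rule Pm)
        ultimately show False using False by simp
      qed
      have "Lb1 n w C f c a \<le> (\<Sum>t=1..m. r (a t) * l (a t))"
        unfolding Lb S_def
        by (rule greedy_lb[where Cr = "\<lambda>j. real (C j)", OF k1 km])
           (use a_sorted r_def sumL reidx[of l] amem lC in \<open>force+\<close>)
      also have "\<dots> = (\<Sum>j=1..m. r j * l j)" by (rule reidx)
      finally show ?thesis using obj by linarith
    qed
  qed
  have attain: "\<exists>x y l. lp_feasible n m w C x y l \<and> lp_objective m f c y l = Lb1 n w C f c a"
  proof (cases "W = 0")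
    case True
    have "n = 0"
    proof (rule ccontr)
      assume "n \<noteq> 0"
      hence "real (w 1) \<le> (\<Sum>i=1..n. real (w i))" by (intro member_le_sum) auto
      moreover have "w 1 > 0" using w_pos \<open>n \<noteq> 0\<close> by auto
      ultimately show False using Wsum True by simp
    qed
    have "k = 0" unfolding k_def kmin_def True by simp
    hence "Lb1 n w C f c a = 0" using Lb True S_def by simp
    moreover have "lp_feasible n m w C (\<lambda>_ _. 0) (\<lambda>_. 0) (\<lambda>_. 0)"
      unfolding lp_feasible_def using \<open>n = 0\<close> by auto
    moreover have "lp_objective m f c (\<lambda>_. 0) (\<lambda>_. 0) = 0" unfolding lp_objective_def by simp
    ultimately show ?thesis by metis
  next
    case False
    have Pm: "W \<le> (\<Sum>j=1..m. C (a j))" using cap reidxn W_def by simp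
    have km: "k \<le> m" unfolding k_def kmin_def by (rule Least_le) (rule Pm)
    have Pk: "W \<le> (\<Sum>j=1..k. C (a j))" unfolding k_def kmin_def by (rule LeastI) (rule Pm)
    have k1: "1 \<le> k" using Pk False by (cases k) auto
    have nPk: "\<not> W \<le> (\<Sum>j=1..k-1. C (a j))"
      unfolding k_def kmin_def by (rule not_less_Least) (use k1 k_def kmin_def in simp)
    have ksuc: "(\<Sum>j=1..k. C (a j)) = (\<Sum>j=1..k-1. C (a j)) + C (a k)"
      using k1 by (cases k) (auto simp: sum.cl_ivl_Suc)
    have S_nat: "S = real (\<Sum>j=1..k-1. C (a j))" unfolding S_def by simp
    have SW: "S < real W" unfolding S_nat using nPk by (simp only: of_nat_less_iff not_le)
    have "W \<le> (\<Sum>j=1..k-1. C (a j)) + C (a k)" using Pk ksuc by simp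
    hence "real W \<le> real (\<Sum>j=1..k-1. C (a j)) + real (C (a k))"
      by (metis of_nat_add of_nat_le_iff)
    hence WSC: "real W - S \<le> real (C (a k))" unfolding S_nat by linarith
    define L where "L t = (if t < k then real (C (a t)) else 0) + (if t = k then real W - S else 0)" for t
    define b where "b = inv_into {1..m} a"
    have inj: "inj_on a {1..m}" using a_perm by (simp add: bij_betw_def)
    have ba: "b (a t) = t" if "t \<in> {1..m}" for t
      unfolding b_def using inv_into_f_f[OF inj that] .
    have aim: "a ` {1..m} = {1..m}" using a_perm by (simp add: bij_betw_def)
    have bmem: "b j \<in> {1..m}" "a (b j) = j" if "j \<in> {1..m}" for j
    proof -
      have jj: "j \<in> a ` {1..m}" using that aim by simp
      show "b j \<in> {1..m}" unfolding b_def by (rule inv_into_into[OF jj])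
      show "a (b j) = j" unfolding b_def by (rule f_inv_into_f[OF jj])
    qed
    define l where "l j = L (b j)" for j
    define y where "y j = l j / real (C j)" for j
    define x where "x i j = l j / real W" for i :: nat and j
    have la: "l (a t) = L t" if "t \<in> {1..m}" for t using ba[OF that] l_def by simp
    have Lb0: "0 \<le> L t \<and> L t \<le> real (C (a t))" for t
      unfolding L_def using SW WSC by auto
    have lb0: "0 \<le> l j \<and> l j \<le> real (C j)" if "j \<in> {1..m}" for j
      using Lb0[of "b j"] bmem[OF that] l_def by simp
    have sumLt: "(\<Sum>t=1..m. L t) = real W"
    proof -
      have "(\<Sum>t=1..m. L t) = (\<Sum>t=1..m. (if t < k then real (C (a t)) else 0))
          + (\<Sum>t=1..m. (if t = k then real W - S else 0))"
        unfolding L_def by (rule sum.distrib)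
      also have "\<dots> = S + (real W - S)"
        using km k1 sum_if_less[of k m "\<lambda>t. real (C (a t))"] by (simp add: S_def)
      finally show ?thesis by simp
    qed
    have sumL: "(\<Sum>j=1..m. l j) = real W"
      using reidx[of l] sumLt la by (metis (no_types, lifting) sum.cong)
    have Wp: "real W > 0" using False by simp
    have lW: "l j \<le> real W" if "j \<in> {1..m}" for j
      using member_le_sum[of j "{1..m}" l] lb0 that sumL by auto
    have feas: "lp_feasible n m w C x y l"
      unfolding lp_feasible_def
    proof (intro conjI ballI)
      fix i assume "i \<in> {1..n}"
      show "(\<Sum>j=1..m. x i j) = 1" unfolding x_def
        using sumL Wp by (simp add: sum_divide_distrib[symmetric])
    next
      fix j assume "j \<in> {1..m}"
      have "(\<Sum>i=1..n. real (w i) * x i j) = (\<Sum>i=1..n. real (w i)) * (l j / real W)"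
        unfolding x_def by (simp add: sum_distrib_right sum_divide_distrib)
      thus "(\<Sum>i=1..n. real (w i) * x i j) = l j" using Wsum Wp by simp
    next
      fix j assume j: "j \<in> {1..m}"
      have "real (C j) > 0" using C_pos j by auto
      thus "l j \<le> real (C j) * y j" unfolding y_def by simp
    next
      fix i j assume "i \<in> {1..n}" "j \<in> {1..m}"
      thus "0 \<le> x i j" "x i j \<le> 1" unfolding x_def using lb0 lW Wp by auto
    next
      fix j assume j: "j \<in> {1..m}"
      have "real (C j) > 0" using C_pos j by auto
      thus "0 \<le> y j" "y j \<le> 1" "0 \<le> l j" unfolding y_def using lb0[OF j] by auto
    qed
    have objeq: "lp_objective m f c y l = (\<Sum>j=1..m. r j * l j)"
      unfolding lp_objective_def
    proof (rule sum.cong)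
      fix j assume j: "j \<in> {1..m}"
      have "real (C j) > 0" using C_pos j by auto
      thus "f j * y j + c j * l j = r j * l j" unfolding y_def r_def ratio_def
        by (simp add: field_simps)
    qed simp
    have "(\<Sum>j=1..m. r j * l j) = (\<Sum>t=1..m. r (a t) * L t)"
      using reidx[of "\<lambda>j. r j * l j"] la by simp
    also have "\<dots> = (\<Sum>t=1..m. (if t < k then real (C (a t)) * r (a t) else 0)
          + (if t = k then (real W - S) * r (a k) else 0))"
      unfolding L_def by (intro sum.cong) (auto simp: algebra_simps)
    also have "\<dots> = Lb1 n w C f c a"
      unfolding sum.distrib Lb using km k1 sum_if_less[of k m "\<lambda>t. real (C (a t)) * r (a t)"] by simp
    finally show ?thesis using feas objeq by metis
  qed
  show ?thesis unfolding lp_optimal_value_def using attain lower by blast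
qed

end
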